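(* Let $n=n_1\cdots n_\ell>2$ with integers $n_i\ge2$ and let $U=F_{(n_1,\dots,n_\ell)}$ (modes labelled as in the context); in particular $U=F_n$ or $U=H_n$ are allowed. For the $n$-photon distillation protocol determined by $U$ with input $\rho^{(n)}(\epsilon)$: (1) $h_n(\Phi_1)=\frac1n h_n(0)$; (2) $h_n(\epsilon)=h_n(0)-(n-1)h_n(0)\,\epsilon+O(\epsilon^2)$ as $\epsilon\to0$ ($n$ fixed).
   Context: For $m\ge2$, $F_m=\frac{1}{\sqrt m}(e^{2\pi i jk/m})_{0\le j,k\le m-1}$, $F_{(n_1,\dots,n_\ell)}=F_{n_1}\otimes\cdots\otimes F_{n_\ell}$, $H_{2^r}=F_{(2,\dots,2)}$; the basis vector $|m_1\rangle\otimes\cdots\otimes|m_\ell\rangle$ is identified with mode $m_1+n_1m_2+\cdots+(n_1\cdots n_{\ell-1})m_\ell$. Photons carry an external mode in $\{0,\dots,n-1\}$ and an internal state in a space with orthonormal basis $\{\xi_0,\xi_1,\dots\}$; $a_i^\dagger[\xi]$ creates a photon in mode $i$ with internal state $\xi$. $\hat U$ acts by $a_j^\dagger[\xi]\mapsto\sum_iU_{ij}a_i^\dagger[\xi]$. Ideal patterns of $U$: $(s_0,\dots,s_{n-1})$ with $\sum s_i=n$, $s_0=1$, $\langle s_0,\dots,s_{n-1}|\hat U|1,\dots,1\rangle\neq0$ (Fock states without internal degrees of freedom). Distillation protocol with input $\sigma$: apply $\hat U$, count photons (regardless of internal state) in modes $1,\dots,n-1$, set $s_0=n-\sum_{j\ge1}s_j$,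 and herald success iff $(s_0,\dots,s_{n-1})$ is ideal; $h_n(\sigma)$ is the success probability. Input $\rho^{(n)}(\epsilon)$: the photon in mode $i$ (one photon per mode) independently has internal state $\xi_0$ with probability $1-\epsilon$, and otherwise (URS model with parameter $R\ge1$) $\xi_j$ with probability $\epsilon/R$ for each $1\le j\le R$, or (OBB limit) $\xi_{i+1}$ with probability $\epsilon$. $h_n(\epsilon)=h_n(\rho^{(n)}(\epsilon))$, and $h_n(0)$ is the heralding rate for the input $|1,\dots,1\rangle$ with all photons in internal state $\xi_0$. Writing $\rho^{(n)}(\epsilon)=\sum_{k=0}^n\binom nk\epsilon^k(1-\epsilon)^{n-k}\Phi_k$, $\Phi_1$ is the normalized mixture of the terms $a_0^\dagger[\xi_{j_0}]\cdots a_{n-1}^\dagger[\xi_{j_{n-1}}]|\vec0\rangle$ in which exactly one index $j_i$ is nonzero (uniformly over the position $i$ and over the allowed error state). *)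

theory Defs
  imports Complex_Main "HOL-Library.FuncSet" "HOL-Library.Landau_Symbols"
begin

definition fourier :: "nat \<Rightarrow> nat \<Rightarrow> nat \<Rightarrow> complex" where
  "fourier m j k = exp (2 * of_real pi * \<i> * of_nat (j * k) / of_nat m) / of_real (sqrt (real m))"

text \<open>t-th digit of mode x in the mixed radix (n_1,...,n_l), with
  x = m_1 + n_1 m_2 + ... + (n_1...n_{l-1}) m_l (digit t is m_{t+1}).\<close>
definition digit :: "nat list \<Rightarrow> nat \<Rightarrow> nat \<Rightarrow> nat" where
  "digit ns t x = (x div prod_list (take t ns)) mod (ns ! t)"

text \<open>F_(n_1,...,n_l) = F_{n_1} tensor ... tensor F_{n_l} under the mode identification above.\<close>
definition fourier_tensor :: "nat list \<Rightarrow> nat \<Rightarrow> nat \<Rightarrow> complex" where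
  "fourier_tensor ns r c = (\<Prod>t<length ns. fourier (ns ! t) (digit ns t r) (digit ns t c))"

text \<open>Input: one photon in each mode i < n, with internal state xi_(lab i).
  Expanding prod_i (sum_k U k i a_k^dagger[xi_(lab i)]) |0>, each map f (photon i goes to
  output mode f i) contributes amplitude prod_i U (f i) i to the Fock state with
  internal-state-resolved occupations res_counts.\<close>

definition out_maps :: "nat \<Rightarrow> (nat \<Rightarrow> nat) set" where
  "out_maps n = Pi\<^sub>E {..<n} (\<lambda>_. {..<n})"

definition counts :: "nat \<Rightarrow> (nat \<Rightarrow> nat) \<Rightarrow> nat \<Rightarrow> nat" where
  "counts n f k = card {i. i < n \<and> f i = k}"

definition res_counts :: "nat \<Rightarrow> (nat \<Rightarrow> nat) \<Rightarrow> (nat \<Rightarrow> nat) \<Rightarrow> nat \<times> nat \<Rightarrow> nat" where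
  "res_counts n lab f = (\<lambda>(k, c). card {i. i < n \<and> f i = k \<and> lab i = c})"

text \<open>Probability of the resolved outcome M (occupation of mode k with internal state c):
  squared norm of the coefficient of prod_{k,c} (a_k^dagger[xi_c])^(M(k,c)) |0>.\<close>
definition res_prob :: "(nat \<Rightarrow> nat \<Rightarrow> complex) \<Rightarrow> nat \<Rightarrow> (nat \<Rightarrow> nat) \<Rightarrow> (nat \<times> nat \<Rightarrow> nat) \<Rightarrow> real" where
  "res_prob U n lab M =
     (cmod (\<Sum>f\<in>{f \<in> out_maps n. res_counts n lab f = M}. \<Prod>i<n. U (f i) i))\<^sup>2
     * (\<Prod>k<n. \<Prod>c\<in>lab ` {..<n}. fact (M (k, c)))"

text \<open>Amplitude <s_0,...,s_{n-1}| U |1,...,1> for indistinguishable photons.\<close>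
definition fock_amp :: "(nat \<Rightarrow> nat \<Rightarrow> complex) \<Rightarrow> nat \<Rightarrow> (nat \<Rightarrow> nat) \<Rightarrow> complex" where
  "fock_amp U n s = (\<Sum>f\<in>{f \<in> out_maps n. counts n f = s}. \<Prod>i<n. U (f i) i)
      * of_real (sqrt (\<Prod>k<n. fact (s k)))"

definition ideal :: "(nat \<Rightarrow> nat \<Rightarrow> complex) \<Rightarrow> nat \<Rightarrow> (nat \<Rightarrow> nat) \<Rightarrow> bool" where
  "ideal U n s \<longleftrightarrow> (\<Sum>k<n. s k) = n \<and> s 0 = 1 \<and> (\<forall>k\<ge>n. s k = 0) \<and> fock_amp U n s \<noteq> 0"

text \<open>Pattern used for heralding: counts in modes 1..n-1, and s_0 = n - sum_{j>=1} s_j.\<close>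
definition herald_pattern :: "nat \<Rightarrow> (nat \<Rightarrow> nat) \<Rightarrow> nat \<Rightarrow> nat" where
  "herald_pattern n t = (\<lambda>k. if k = 0 then n - (\<Sum>j\<in>{1..<n}. t j) else if k < n then t k else 0)"

text \<open>Heralding rate for the pure input with internal labels lab (photon counting ignores
  the internal state).\<close>
definition herald_rate :: "(nat \<Rightarrow> nat \<Rightarrow> complex) \<Rightarrow> nat \<Rightarrow> (nat \<Rightarrow> nat) \<Rightarrow> real" where
  "herald_rate U n lab =
     (\<Sum>M\<in>res_counts n lab ` out_maps n.
        if ideal U n (herald_pattern n (\<lambda>k. \<Sum>c\<in>lab ` {..<n}. M (k, c)))
        then res_prob U n lab M else 0)"

datatype noise = URS nat | OBB

text \<open>Allowed internal labels of the photon in mode i (0 = ideal state xi_0).\<close>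
fun allowed_labels :: "noise \<Rightarrow> nat \<Rightarrow> nat set" where
  "allowed_labels (URS R) i = {0..R}"
| "allowed_labels OBB i = {0, Suc i}"

fun label_weight :: "noise \<Rightarrow> real \<Rightarrow> nat \<Rightarrow> real" where
  "label_weight (URS R) \<epsilon> c = (if c = 0 then 1 - \<epsilon> else \<epsilon> / real R)"
| "label_weight OBB \<epsilon> c = (if c = 0 then 1 - \<epsilon> else \<epsilon>)"

text \<open>h_n(eps) = h_n(rho^(n)(eps)), by linearity of the success probability in the input state.\<close>
definition h_eps :: "noise \<Rightarrow> (nat \<Rightarrow> nat \<Rightarrow> complex) \<Rightarrow> nat \<Rightarrow> real \<Rightarrow> real" where
  "h_eps model U n \<epsilon> =
     (\<Sum>lab\<in>Pi\<^sub>E {..<n} (allowed_labels model).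
        (\<Prod>i<n. label_weight model \<epsilon> (lab i)) * herald_rate U n lab)"

definition error_labels :: "noise \<Rightarrow> nat \<Rightarrow> nat set" where
  "error_labels model i = allowed_labels model i - {0}"

text \<open>h_n(Phi_1): uniform mixture over the position i of the single error and its error state.\<close>
definition h_Phi1 :: "noise \<Rightarrow> (nat \<Rightarrow> nat \<Rightarrow> complex) \<Rightarrow> nat \<Rightarrow> real" where
  "h_Phi1 model U n =
     (\<Sum>i<n. \<Sum>c\<in>error_labels model i.
        herald_rate U n (\<lambda>k. if k = i then c else 0)
          / (real n * real (card (error_labels model i))))"

end

theory Submission
  imports Defs
begin

lemma digit_Cons0: "digit (m # ns) 0 x = x mod m"
  by (simp add: digit_def)

lemma digit_ConsS: "digit (m # ns) (Suc t) x = digit ns t (x div m)"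
  by (simp add: digit_def div_mult2_eq)

lemma fourier_tensor_Cons:
  "fourier_tensor (m # ns) r c = fourier m (r mod m) (c mod m) * fourier_tensor ns (r div m) (c div m)"
  unfolding fourier_tensor_def
  by (simp only: length_Cons prod.lessThan_Suc_shift) (simp add: digit_Cons0 digit_ConsS)

lemma exp_nat_period: "exp (2 * of_real pi * \<i> * of_nat k) = 1"
proof -
  have "exp (2 * of_real pi * \<i> * of_nat k) = exp (of_nat k * (2 * of_real pi * \<i>))"
    by (simp add: mult_ac)
  also have "\<dots> = 1" by (simp only: exp_of_nat_mult exp_two_pi_i power_one)
  finally show ?thesis .
qed

lemma fourier_shift:
  assumes "m > 0"
  shows "fourier m a ((b + d) mod m) = fourier m a b * exp (2 * of_real pi * \<i> * of_nat (a * d) / of_nat m)"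
proof -
  define q where "q = (b + d) div m"
  have e: "a * ((b + d) mod m) + m * (a * q) = a * b + a * d"
    unfolding q_def by (metis add_mult_distrib2 mult.left_commute mod_mult_div_eq)
  have "exp (2 * of_real pi * \<i> * of_nat (a * ((b + d) mod m)) / of_nat m)
      = exp (2 * of_real pi * \<i> * of_nat (a * ((b + d) mod m)) / of_nat m) * exp (2 * of_real pi * \<i> * of_nat (a * q))"
    by (simp only: exp_nat_period mult_1_right)
  also have "\<dots> = exp (2 * of_real pi * \<i> * of_nat (a * ((b + d) mod m)) / of_nat m + 2 * of_real pi * \<i> * of_nat (a * q))"
    by (simp add: exp_add)
  also have "2 * of_real pi * \<i> * of_nat (a * ((b + d) mod m)) / of_nat m + 2 * of_real pi * \<i> * of_nat (a * q)
     = 2 * of_real pi * \<i> * of_nat (a * ((b + d) mod m) + m * (a * q)) / (of_nat m :: complex)"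
    using assms by (simp add: field_simps)
  also have "\<dots> = 2 * of_real pi * \<i> * of_nat (a * b) / of_nat m + 2 * of_real pi * \<i> * of_nat (a * d) / (of_nat m :: complex)"
    unfolding e using assms by (simp add: field_simps)
  finally show ?thesis
    unfolding fourier_def by (simp add: exp_add)
qed

lemma sym_exists:
  assumes "\<forall>m\<in>set ns. m > 0" "i0 < prod_list ns" "i1 < prod_list ns"
  shows "\<exists>\<pi> \<psi>. bij_betw \<pi> {..<prod_list ns} {..<prod_list ns} \<and> \<pi> i0 = i1 \<and>
     (\<forall>k i. i < prod_list ns \<longrightarrow> fourier_tensor ns k (\<pi> i) = fourier_tensor ns k i * \<psi> k)"
  using assms
proof (induction ns arbitrary: i0 i1)
  case Nil
  then show ?case by (intro exI[of _ "\<lambda>x. x"] exI[of _ "\<lambda>_. 1"]) (auto simp: bij_betw_def)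
next
  case (Cons m ns)
  have m: "m > 0" using Cons.prems by auto
  have i0: "i0 div m < prod_list ns" "i1 div m < prod_list ns" using Cons.prems
    by (auto simp: div_less_iff_less_mult mult.commute)
  obtain \<pi>' \<psi>' where pi': "bij_betw \<pi>' {..<prod_list ns} {..<prod_list ns}" "\<pi>' (i0 div m) = i1 div m"
    "\<And>k i. i < prod_list ns \<Longrightarrow> fourier_tensor ns k (\<pi>' i) = fourier_tensor ns k i * \<psi>' k"
    using Cons.IH[OF _ i0] Cons.prems by auto
  define d where "d = i1 mod m + m - i0 mod m"
  define \<pi> where "\<pi> x = (x mod m + d) mod m + m * \<pi>' (x div m)" for x
  define \<psi> where "\<psi> k = exp (2 * of_real pi * \<i> * of_nat ((k mod m) * d) / of_nat m) * \<psi>' (k div m)" for k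
  define d' where "d' = m - d mod m"
  have dd: "d + d' = m * (d div m + 1)"
  proof -
    have "d + d' = d div m * m + m" unfolding d'_def using div_mult_mod_eq[of d m] mod_less_divisor[OF m, of d] by linarith
    then show ?thesis by (simp add: algebra_simps)
  qed
  have dinv: "((z + d) mod m + d') mod m = z mod m" for z
  proof -
    have "((z + d) mod m + d') mod m = (z + (d + d')) mod m" by (simp add: mod_add_left_eq add.assoc)
    also have "\<dots> = z mod m" unfolding dd by (metis mod_mult_self1 mult.commute)
    finally show ?thesis .
  qed
  have pmod: "\<pi> x mod m = (x mod m + d) mod m" for x
    unfolding \<pi>_def by simp
  have pdiv: "\<pi> x div m = \<pi>' (x div m)" for x
    unfolding \<pi>_def using m by simp
  have "\<pi> i0 = i1"
  proof -
    have "(i0 mod m + d) mod m = i1 mod m"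
    proof -
      have "i0 mod m < m" using m by simp
      then have "i0 mod m + d = i1 mod m + m" unfolding d_def by linarith
      then show ?thesis by simp
    qed
    then show ?thesis unfolding \<pi>_def pi'(2) by simp
  qed
  moreover have "bij_betw \<pi> {..<prod_list (m # ns)} {..<prod_list (m # ns)}"
  proof -
    have sub: "\<pi> ` {..<prod_list (m # ns)} \<subseteq> {..<prod_list (m # ns)}"
    proof
      fix y assume "y \<in> \<pi> ` {..<prod_list (m # ns)}"
      then obtain x where x: "x < m * prod_list ns" "y = \<pi> x" by auto
      have "x div m < prod_list ns" using x m by (simp add: div_less_iff_less_mult mult.commute)
      then have "\<pi>' (x div m) < prod_list ns" using pi'(1) by (auto simp: bij_betw_def)
      then have "\<pi>' (x div m) + 1 \<le> prod_list ns" by simp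
      then have "m * (\<pi>' (x div m) + 1) \<le> m * prod_list ns" by (rule mult_le_mono2)
      moreover have "(x mod m + d) mod m < m" using m by simp
      ultimately show "y \<in> {..<prod_list (m # ns)}" using x unfolding \<pi>_def by (simp add: algebra_simps)
    qed
    have inj: "inj_on \<pi> {..<prod_list (m # ns)}"
    proof (rule inj_onI)
      fix x y assume x: "x \<in> {..<prod_list (m # ns)}" and y: "y \<in> {..<prod_list (m # ns)}" and e: "\<pi> x = \<pi> y"
      have xd: "x div m < prod_list ns" "y div m < prod_list ns" using x y m
        by (auto simp: div_less_iff_less_mult mult.commute)
      have "\<pi>' (x div m) = \<pi>' (y div m)" using e pdiv by metis
      then have dd: "x div m = y div m" using pi'(1) xd by (auto simp: bij_betw_def inj_on_def)
      have "(x mod m + d) mod m = (y mod m + d) mod m" using e pmod by metis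
      then have "((x mod m + d) mod m + d') mod m = ((y mod m + d) mod m + d') mod m" by simp
      then have "x mod m = y mod m" using dinv by simp
      then show "x = y" using dd by (metis div_mult_mod_eq)
    qed
    show ?thesis unfolding bij_betw_def using endo_inj_surj[OF _ sub inj] inj by auto
  qed
  moreover have "fourier_tensor (m # ns) k (\<pi> i) = fourier_tensor (m # ns) k i * \<psi> k"
    if "i < prod_list (m # ns)" for k i
  proof -
    have "i div m < prod_list ns" using that m by (simp add: div_less_iff_less_mult mult.commute)
    then show ?thesis
      unfolding fourier_tensor_Cons pmod pdiv \<psi>_def
      using pi'(3) fourier_shift[OF m] by (simp add: mult_ac)
  qed
  ultimately show ?case by blast
qed


definition Tm :: "(nat \<Rightarrow> nat \<Rightarrow> complex) \<Rightarrow> nat \<Rightarrow> (nat \<Rightarrow> nat) \<Rightarrow> complex" where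
  "Tm U n f = (\<Prod>i<n. U (f i) i)"

definition Aamp :: "(nat \<Rightarrow> nat \<Rightarrow> complex) \<Rightarrow> nat \<Rightarrow> (nat \<Rightarrow> nat) \<Rightarrow> complex" where
  "Aamp U n s = (\<Sum>f\<in>{f\<in>out_maps n. counts n f = s}. Tm U n f)"

definition Bamp :: "(nat \<Rightarrow> nat \<Rightarrow> complex) \<Rightarrow> nat \<Rightarrow> nat \<Rightarrow> nat \<Rightarrow> (nat \<Rightarrow> nat) \<Rightarrow> complex" where
  "Bamp U n i0 k s = (\<Sum>f\<in>{f\<in>out_maps n. counts n f = s \<and> f i0 = k}. Tm U n f)"

lemma finite_out_maps: "finite (out_maps n)"
  unfolding out_maps_def by (rule finite_PiE) auto

lemma out_maps_lt: "f \<in> out_maps n \<Longrightarrow> i < n \<Longrightarrow> f i < n"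
  unfolding out_maps_def by auto

lemma prod_group_counts:
  assumes "f \<in> out_maps n"
  shows "(\<Prod>i<n. \<psi> (f i)) = (\<Prod>k<n. \<psi> k ^ counts n f k)"
proof -
  have "(\<Prod>i<n. \<psi> (f i)) = (\<Prod>k<n. \<Prod>i\<in>{i. i \<in> {..<n} \<and> f i = k}. \<psi> (f i))"
    by (rule prod.group[symmetric]) (use assms out_maps_lt in auto)
  also have "\<dots> = (\<Prod>k<n. \<psi> k ^ counts n f k)"
  proof (rule prod.cong[OF refl])
    fix k
    have "(\<Prod>i\<in>{i. i \<in> {..<n} \<and> f i = k}. \<psi> (f i)) = (\<Prod>i\<in>{i. i \<in> {..<n} \<and> f i = k}. \<psi> k)"
      by (rule prod.cong) auto
    also have "\<dots> = \<psi> k ^ counts n f k" unfolding counts_def by simp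
    finally show "(\<Prod>i\<in>{i. i \<in> {..<n} \<and> f i = k}. \<psi> (f i)) = \<psi> k ^ counts n f k" .
  qed
  finally show ?thesis .
qed

lemma bij_betw_filter:
  assumes "bij_betw \<Phi> A A"
  shows "bij_betw \<Phi> {x\<in>A. Q (\<Phi> x)} {y\<in>A. Q y}"
  using assms unfolding bij_betw_def inj_on_def by auto

lemma transl:
  assumes bij: "bij_betw \<pi> {..<n} {..<n}" and pi0: "\<pi> i0 = i1" and i0: "i0 < n"
    and U: "\<And>k i. i < n \<Longrightarrow> U k (\<pi> i) = U k i * \<psi> k"
    and A: "Aamp U n s \<noteq> 0"
  shows "Bamp U n i1 k s = Bamp U n i0 k s"
proof -
  define \<Phi> where "\<Phi> f = restrict (\<lambda>i. f (\<pi> i)) {..<n}" for f :: "nat \<Rightarrow> nat"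
  define \<Lambda> where "\<Lambda> s = (\<Prod>k<n. \<psi> k ^ s k)" for s
  have pin: "i < n \<Longrightarrow> \<pi> i < n" for i using bij by (auto simp: bij_betw_def)
  have Phi_in: "\<Phi> f \<in> out_maps n" if "f \<in> out_maps n" for f
    using that pin unfolding \<Phi>_def out_maps_def by auto
  have Phi_counts: "counts n (\<Phi> f) = counts n f" for f
  proof
    fix k
    have im: "\<pi> ` {i. i < n \<and> f (\<pi> i) = k} = {j. j < n \<and> f j = k}"
    proof
      show "\<pi> ` {i. i < n \<and> f (\<pi> i) = k} \<subseteq> {j. j < n \<and> f j = k}"
      proof (rule subsetI)
        fix j assume "j \<in> \<pi> ` {i. i < n \<and> f (\<pi> i) = k}"
        then obtain i where "i < n" "f (\<pi> i) = k" "j = \<pi> i" by blast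
        then show "j \<in> {j. j < n \<and> f j = k}" using pin by simp
      qed
      show "{j. j < n \<and> f j = k} \<subseteq> \<pi> ` {i. i < n \<and> f (\<pi> i) = k}"
      proof
        fix j assume j: "j \<in> {j. j < n \<and> f j = k}"
        have "j \<in> \<pi> ` {..<n}" using bij j unfolding bij_betw_def by simp
        then obtain i where "i < n" "\<pi> i = j" by auto
        then show "j \<in> \<pi> ` {i. i < n \<and> f (\<pi> i) = k}" using j by auto
      qed
    qed
    have inj: "inj_on \<pi> {i. i < n \<and> f (\<pi> i) = k}"
    proof (rule inj_on_subset)
      show "inj_on \<pi> {..<n}" using bij by (simp add: bij_betw_def)
      show "{i. i < n \<and> f (\<pi> i) = k} \<subseteq> {..<n}" by (simp add: subset_eq)
    qed
    have "card {i. i < n \<and> f (\<pi> i) = k} = card {j. j < n \<and> f j = k}"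
      using card_image[OF inj] unfolding im by simp
    moreover have "{i. i < n \<and> \<Phi> f i = k} = {i. i < n \<and> f (\<pi> i) = k}" unfolding \<Phi>_def by auto
    ultimately show "counts n (\<Phi> f) k = counts n f k" unfolding counts_def by simp
  qed
  have Phi_bij: "bij_betw \<Phi> (out_maps n) (out_maps n)"
  proof -
    have inj: "inj_on \<Phi> (out_maps n)"
    proof (rule inj_onI)
      fix f g assume f: "f \<in> out_maps n" and g: "g \<in> out_maps n" and e: "\<Phi> f = \<Phi> g"
      have "\<forall>i<n. f (\<pi> i) = g (\<pi> i)"
        using e unfolding \<Phi>_def by (metis lessThan_iff restrict_apply')
      have "\<forall>j<n. f j = g j"
      proof (intro allI impI)
        fix j assume j: "j < n"
        have "j \<in> \<pi> ` {..<n}" using bij j unfolding bij_betw_def by simp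
        then obtain i where "i < n" "\<pi> i = j" by auto
        then show "f j = g j" using \<open>\<forall>i<n. f (\<pi> i) = g (\<pi> i)\<close> by auto
      qed
      then show "f = g" using f g unfolding out_maps_def by (intro PiE_ext) auto
    qed
    have "\<Phi> ` out_maps n \<subseteq> out_maps n" using Phi_in by auto
    then show ?thesis unfolding bij_betw_def using endo_inj_surj[OF finite_out_maps _ inj] inj by auto
  qed
  have T: "Tm U n f = Tm U n (\<Phi> f) * \<Lambda> (counts n f)" if f: "f \<in> out_maps n" for f
  proof -
    have "Tm U n f = (\<Prod>i<n. U (f (\<pi> i)) (\<pi> i))"
      unfolding Tm_def by (rule prod.reindex_bij_betw[symmetric, OF bij])
    also have "\<dots> = (\<Prod>i<n. U (\<Phi> f i) i * \<psi> (\<Phi> f i))"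
      by (rule prod.cong) (auto simp: \<Phi>_def U)
    also have "\<dots> = Tm U n (\<Phi> f) * (\<Prod>i<n. \<psi> (\<Phi> f i))"
      unfolding Tm_def by (simp add: prod.distrib)
    also have "(\<Prod>i<n. \<psi> (\<Phi> f i)) = \<Lambda> (counts n f)"
      unfolding \<Lambda>_def using prod_group_counts[OF Phi_in[OF f]] Phi_counts by simp
    finally show ?thesis .
  qed
  have key: "(\<Sum>f\<in>{f\<in>out_maps n. counts n f = s \<and> P (\<Phi> f)}. Tm U n f)
      = \<Lambda> s * (\<Sum>g\<in>{g\<in>out_maps n. counts n g = s \<and> P g}. Tm U n g)" for P
  proof -
    have "(\<Sum>f\<in>{f\<in>out_maps n. counts n f = s \<and> P (\<Phi> f)}. Tm U n f)
        = (\<Sum>f\<in>{f\<in>out_maps n. counts n (\<Phi> f) = s \<and> P (\<Phi> f)}. Tm U n (\<Phi> f) * \<Lambda> s)"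
      by (rule sum.cong) (auto simp: T Phi_counts)
    also have "\<dots> = (\<Sum>g\<in>{g\<in>out_maps n. counts n g = s \<and> P g}. Tm U n g * \<Lambda> s)"
      by (rule sum.reindex_bij_betw[OF bij_betw_filter[OF Phi_bij]])
    also have "\<dots> = (\<Sum>g\<in>{g\<in>out_maps n. counts n g = s \<and> P g}. Tm U n g) * \<Lambda> s"
      by (rule sum_distrib_right[symmetric])
    finally show ?thesis by (simp only: mult.commute)
  qed
  have "Aamp U n s = \<Lambda> s * Aamp U n s"
    using key[of "\<lambda>_. True"] unfolding Aamp_def by simp
  then have L: "\<Lambda> s = 1" using A by simp
  have "\<Phi> f i0 = f i1" for f unfolding \<Phi>_def using i0 pi0 by simp
  then have "Bamp U n i1 k s = \<Lambda> s * Bamp U n i0 k s"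
    using key[of "\<lambda>g. g i0 = k"] unfolding Bamp_def by simp
  then show ?thesis using L by simp
qed

lemma Bamp_formula:
  assumes sym: "\<And>i0 i1. i0 < n \<Longrightarrow> i1 < n \<Longrightarrow> \<exists>\<pi> \<psi>. bij_betw \<pi> {..<n} {..<n} \<and> \<pi> i0 = i1 \<and>
       (\<forall>k i. i < n \<longrightarrow> U k (\<pi> i) = U k i * \<psi> k)"
    and A: "Aamp U n s \<noteq> 0" and i0: "i0 < n"
  shows "of_nat n * Bamp U n i0 k s = of_nat (s k) * Aamp U n s"
proof -
  have eq: "Bamp U n i1 k s = Bamp U n i0 k s" if i1: "i1 < n" for i1
  proof -
    obtain \<pi> \<psi> where "bij_betw \<pi> {..<n} {..<n}" "\<pi> i0 = i1" "\<forall>k i. i < n \<longrightarrow> U k (\<pi> i) = U k i * \<psi> k"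
      using sym[OF i0 i1] by blast
    then show ?thesis using transl[of \<pi> n i0 i1 U \<psi> s k] i0 A by blast
  qed
  define S where "S = {f\<in>out_maps n. counts n f = s}"
  have fS: "finite S" unfolding S_def using finite_out_maps by simp
  have "of_nat n * Bamp U n i0 k s = (\<Sum>i1<n. Bamp U n i1 k s)" using eq by simp
  also have "\<dots> = (\<Sum>i1<n. \<Sum>f\<in>S. if f i1 = k then Tm U n f else 0)"
  proof (rule sum.cong[OF refl])
    fix i1
    have "{f\<in>out_maps n. counts n f = s \<and> f i1 = k} = {f\<in>S. f i1 = k}" unfolding S_def by auto
    then show "Bamp U n i1 k s = (\<Sum>f\<in>S. if f i1 = k then Tm U n f else 0)"
      unfolding Bamp_def using sum.inter_filter[OF fS, of "Tm U n" "\<lambda>f. f i1 = k"] by simp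
  qed
  also have "\<dots> = (\<Sum>f\<in>S. \<Sum>i1<n. if f i1 = k then Tm U n f else 0)" by (rule sum.swap)
  also have "\<dots> = (\<Sum>f\<in>S. of_nat (s k) * Tm U n f)"
  proof (rule sum.cong[OF refl])
    fix f assume f: "f \<in> S"
    have "(\<Sum>i1<n. if f i1 = k then Tm U n f else 0) = (\<Sum>i1\<in>{i1\<in>{..<n}. f i1 = k}. Tm U n f)"
      by (rule sum.inter_filter[symmetric]) simp
    also have "\<dots> = of_nat (counts n f k) * Tm U n f" unfolding counts_def by simp
    finally show "(\<Sum>i1<n. if f i1 = k then Tm U n f else 0) = of_nat (s k) * Tm U n f" using f unfolding S_def by simp
  qed
  also have "\<dots> = of_nat (s k) * Aamp U n s" unfolding Aamp_def S_def by (simp add: sum_distrib_left)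
  finally show ?thesis .
qed


lemma counts_ge: "f \<in> out_maps n \<Longrightarrow> n \<le> k \<Longrightarrow> counts n f k = 0"
proof -
  assume f: "f \<in> out_maps n" and k: "n \<le> k"
  have "{i. i < n \<and> f i = k} = {}" using out_maps_lt[OF f] k by fastforce
  then show ?thesis unfolding counts_def by simp
qed

lemma counts_sum: "f \<in> out_maps n \<Longrightarrow> (\<Sum>k<n. counts n f k) = n"
proof -
  assume f: "f \<in> out_maps n"
  have "(\<Sum>k<n. \<Sum>i\<in>{i. i \<in> {..<n} \<and> f i = k}. (1::nat)) = (\<Sum>i<n. 1)"
    by (rule sum.group) (use f out_maps_lt in auto)
  then show ?thesis unfolding counts_def by simp
qed

lemma herald_pattern_id:
  assumes "f \<in> out_maps n" "n \<ge> 1"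
  shows "herald_pattern n (counts n f) = counts n f"
proof
  fix k
  have s: "(\<Sum>k<n. counts n f k) = counts n f 0 + (\<Sum>j\<in>{1..<n}. counts n f j)"
    using assms(2) by (simp add: lessThan_atLeast0 sum.atLeast_Suc_lessThan)
  show "herald_pattern n (counts n f) k = counts n f k"
    unfolding herald_pattern_def using counts_sum[OF assms(1)] s counts_ge[OF assms(1)]
    by auto
qed

lemma herald_rate_zero:
  assumes n: "n \<ge> 1" and lab: "\<forall>i<n. lab i = 0"
  shows "herald_rate U n lab = (\<Sum>s\<in>counts n ` out_maps n.
     if ideal U n s then (cmod (Aamp U n s))\<^sup>2 * (\<Prod>k<n. fact (s k)) else 0)"
proof -
  define \<phi> where "\<phi> s = (\<lambda>(k, c::nat). if c = 0 then s k else (0::nat))" for s :: "nat \<Rightarrow> nat"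
  have labim: "lab ` {..<n} = {0}"
  proof
    show "lab ` {..<n} \<subseteq> {0}" using lab by auto
    have "lab 0 = 0" "0 < n" using n lab by auto
    then show "{0} \<subseteq> lab ` {..<n}" by (metis empty_subsetI imageI insert_subset lessThan_iff)
  qed
  have R: "res_counts n lab f = \<phi> (counts n f)" for f
  proof -
    have "card {i. i < n \<and> f i = k \<and> lab i = c} = (if c = 0 then counts n f k else 0)" for k c
    proof (cases "c = 0")
      case True
      then have "{i. i < n \<and> f i = k \<and> lab i = c} = {i. i < n \<and> f i = k}" using lab by auto
      then show ?thesis using True unfolding counts_def by simp
    next
      case False
      then have "{i. i < n \<and> f i = k \<and> lab i = c} = {}" using lab by auto
      then show ?thesis using False by simp
    qed
    then show ?thesis unfolding res_counts_def \<phi>_def by (auto simp: fun_eq_iff)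
  qed
  have inj: "inj \<phi>"
  proof (rule injI)
    fix s t assume "\<phi> s = \<phi> t"
    then have "\<phi> s (k, 0) = \<phi> t (k, 0)" for k by simp
    then show "s = t" unfolding \<phi>_def by auto
  qed
  have im: "res_counts n lab ` out_maps n = \<phi> ` (counts n ` out_maps n)"
    unfolding R by (simp add: image_image)
  have "herald_rate U n lab = (\<Sum>M\<in>\<phi> ` (counts n ` out_maps n).
        if ideal U n (herald_pattern n (\<lambda>k. \<Sum>c\<in>lab ` {..<n}. M (k, c)))
        then res_prob U n lab M else 0)"
    unfolding herald_rate_def im ..
  also have "\<dots> = (\<Sum>s\<in>counts n ` out_maps n.
        if ideal U n (herald_pattern n (\<lambda>k. \<Sum>c\<in>lab ` {..<n}. \<phi> s (k, c)))
        then res_prob U n lab (\<phi> s) else 0)"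
    by (rule sum.reindex[OF inj_on_subset[OF inj subset_UNIV], unfolded comp_def])
  also have "\<dots> = (\<Sum>s\<in>counts n ` out_maps n.
     if ideal U n s then (cmod (Aamp U n s))\<^sup>2 * (\<Prod>k<n. fact (s k)) else 0)"
  proof (rule sum.cong[OF refl])
    fix s assume "s \<in> counts n ` out_maps n"
    then obtain g where g: "g \<in> out_maps n" "s = counts n g" by auto
    have p: "(\<lambda>k. \<Sum>c\<in>lab ` {..<n}. \<phi> s (k, c)) = s" unfolding labim \<phi>_def by simp
    have hp: "herald_pattern n s = s" using herald_pattern_id[OF g(1) n] g(2) by simp
    have set: "{f \<in> out_maps n. res_counts n lab f = \<phi> s} = {f\<in>out_maps n. counts n f = s}"
      unfolding R using inj by (auto dest: injD)
    have rp: "res_prob U n lab (\<phi> s) = (cmod (Aamp U n s))\<^sup>2 * (\<Prod>k<n. fact (s k))"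
      unfolding res_prob_def set Aamp_def Tm_def labim by (simp add: \<phi>_def)
    show "(if ideal U n (herald_pattern n (\<lambda>k. \<Sum>c\<in>lab ` {..<n}. \<phi> s (k, c)))
        then res_prob U n lab (\<phi> s) else 0) =
        (if ideal U n s then (cmod (Aamp U n s))\<^sup>2 * (\<Prod>k<n. fact (s k)) else 0)"
      unfolding p hp rp ..
  qed
  finally show ?thesis .
qed

lemma herald_rate_one:
  assumes n: "n \<ge> 2" and i0: "i0 < n" and c: "c \<noteq> 0"
    and lab: "lab = (\<lambda>k. if k = i0 then c else 0)"
  shows "herald_rate U n lab = (\<Sum>(s, k0)\<in>(SIGMA s:counts n ` out_maps n. {k0. k0 < n \<and> 1 \<le> s k0}).
     if ideal U n s then (cmod (Bamp U n i0 k0 s))\<^sup>2 * (\<Prod>k<n. fact (s k - (if k = k0 then 1 else 0))) else 0)"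
proof -
  define C where "C = counts n ` out_maps n"
  define E where "E = (SIGMA s:C. {k0. k0 < n \<and> 1 \<le> s k0})"
  define \<psi> where "\<psi> p = (\<lambda>(k, c'::nat). if c' = 0 then fst p k - (if k = snd p then 1 else 0)
      else if c' = c then (if k = snd p then 1 else (0::nat)) else 0)" for p :: "(nat \<Rightarrow> nat) \<times> nat"
  have labim: "lab ` {..<n} = {0, c}"
  proof
    show "lab ` {..<n} \<subseteq> {0, c}" unfolding lab by auto
    define j :: nat where "j = (if i0 = 0 then 1 else 0)"
    have "j < n" "j \<noteq> i0" unfolding j_def using n by auto
    then have "lab j = 0" "lab i0 = c" unfolding lab by auto
    then show "{0, c} \<subseteq> lab ` {..<n}" using \<open>j < n\<close> i0 by (metis empty_subsetI imageI insert_subset lessThan_iff)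
  qed
  have R: "res_counts n lab f = \<psi> (counts n f, f i0)" for f
  proof -
    have "card {i. i < n \<and> f i = k \<and> lab i = c'} = \<psi> (counts n f, f i0) (k, c')" for k c'
    proof -
      consider "c' = 0" | "c' = c" | "c' \<noteq> 0" "c' \<noteq> c" by blast
      then show ?thesis
      proof cases
        case 1
        then have "{i. i < n \<and> f i = k \<and> lab i = c'} = {i. i < n \<and> f i = k} - {i0}" using c unfolding lab by auto
        then show ?thesis using 1 i0 unfolding \<psi>_def counts_def by (simp add: card_Diff_singleton_if)
      next
        case 2
        then have "{i. i < n \<and> f i = k \<and> lab i = c'} = (if f i0 = k then {i0} else {})" using c i0 unfolding lab by auto
        then show ?thesis using 2 c unfolding \<psi>_def by simp
      next
        case 3
        then have "{i. i < n \<and> f i = k \<and> lab i = c'} = {}" unfolding lab by auto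
        then show ?thesis using 3 unfolding \<psi>_def by simp
      qed
    qed
    then show ?thesis unfolding res_counts_def by (auto simp: fun_eq_iff)
  qed
  have inE: "(counts n f, f i0) \<in> E" if f: "f \<in> out_maps n" for f
  proof -
    have "i0 \<in> {i. i < n \<and> f i = f i0}" using i0 by simp
    moreover have "finite {i. i < n \<and> f i = f i0}" by simp
    ultimately have "0 < card {i. i < n \<and> f i = f i0}" by (subst card_gt_0_iff) blast
    then have c1: "1 \<le> counts n f (f i0)" unfolding counts_def by simp
    show ?thesis unfolding E_def C_def using f out_maps_lt[OF f i0] c1 by auto
  qed
  have inj: "inj_on \<psi> E"
  proof (rule inj_onI)
    fix p q assume p: "p \<in> E" and q: "q \<in> E" and e: "\<psi> p = \<psi> q"
    obtain s k0 where ps: "p = (s, k0)" by (cases p)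
    obtain t k1 where qt: "q = (t, k1)" by (cases q)
    have "\<psi> p (k0, c) = \<psi> q (k0, c)" using e by simp
    then have k: "k0 = k1" using c unfolding ps qt \<psi>_def by (auto split: if_splits)
    have "\<psi> p (k, 0) = \<psi> q (k, 0)" for k using e by simp
    then have "s k - (if k = k0 then 1 else 0) = t k - (if k = k0 then 1 else 0)" for k
      unfolding ps qt \<psi>_def k by simp
    moreover have "1 \<le> s k0" "1 \<le> t k0" using p q unfolding ps qt E_def k by auto
    ultimately have "s k = t k" for k
    proof -
      assume h: "\<And>k. s k - (if k = k0 then 1 else 0) = t k - (if k = k0 then 1 else 0)" "1 \<le> s k0" "1 \<le> t k0"
      show "s k = t k"
      proof (cases "k = k0")
        case True
        then show ?thesis using h(1)[of k] h(2,3) by simp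
      next
        case False
        then show ?thesis using h(1)[of k] by simp
      qed
    qed
    then show "p = q" unfolding ps qt k by auto
  qed
  have sub: "res_counts n lab ` out_maps n \<subseteq> \<psi> ` E" using inE R by auto
  have finE: "finite E" unfolding E_def C_def using finite_out_maps by auto
  define F where "F M = (if ideal U n (herald_pattern n (\<lambda>k. \<Sum>c\<in>lab ` {..<n}. M (k, c)))
        then res_prob U n lab M else 0)" for M
  have "herald_rate U n lab = (\<Sum>M\<in>res_counts n lab ` out_maps n. F M)"
    unfolding herald_rate_def F_def ..
  also have "\<dots> = (\<Sum>M\<in>\<psi> ` E. F M)"
  proof (rule sum.mono_neutral_left[OF finite_imageI[OF finE] sub])
    show "\<forall>M\<in>\<psi> ` E - res_counts n lab ` out_maps n. F M = 0"
    proof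
      fix M assume M: "M \<in> \<psi> ` E - res_counts n lab ` out_maps n"
      have em: "{f \<in> out_maps n. res_counts n lab f = M} = {}" using M by blast
      show "F M = 0" unfolding F_def res_prob_def em by simp
    qed
  qed
  also have "\<dots> = (\<Sum>p\<in>E. F (\<psi> p))" by (rule sum.reindex[OF inj, unfolded comp_def])
  also have "\<dots> = (\<Sum>(s, k0)\<in>E.
     if ideal U n s then (cmod (Bamp U n i0 k0 s))\<^sup>2 * (\<Prod>k<n. fact (s k - (if k = k0 then 1 else 0))) else 0)"
  proof (rule sum.cong[OF refl])
    fix p assume p: "p \<in> E"
    obtain s k0 where ps: "p = (s, k0)" by (cases p)
    have k0: "k0 < n" "1 \<le> s k0" "s \<in> C" using p unfolding ps E_def by auto
    then obtain g where g: "g \<in> out_maps n" "s = counts n g" unfolding C_def by auto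
    have pat: "(\<lambda>k. \<Sum>c'\<in>lab ` {..<n}. \<psi> p (k, c')) = s"
      unfolding labim ps \<psi>_def using c k0(2) by (auto simp: fun_eq_iff)
    have hp: "herald_pattern n s = s" using herald_pattern_id[OF g(1)] n g(2) by simp
    have set: "{f \<in> out_maps n. res_counts n lab f = \<psi> p} = {f\<in>out_maps n. counts n f = s \<and> f i0 = k0}"
    proof -
      have "res_counts n lab f = \<psi> p \<longleftrightarrow> counts n f = s \<and> f i0 = k0" if "f \<in> out_maps n" for f
        unfolding R using inj_onD[OF inj _ inE[OF that] p] ps by auto
      then show ?thesis by auto
    qed
    have fp: "(\<Prod>k<n. \<Prod>c'\<in>lab ` {..<n}. (fact (\<psi> p (k, c')) :: real))
        = (\<Prod>k<n. fact (s k - (if k = k0 then 1 else 0)))"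
      unfolding labim using c by (simp add: ps \<psi>_def, intro prod.cong, simp_all)
    have rp: "res_prob U n lab (\<psi> p) = (cmod (Bamp U n i0 k0 s))\<^sup>2 * (\<Prod>k<n. fact (s k - (if k = k0 then 1 else 0)))"
      unfolding res_prob_def set Bamp_def Tm_def fp ..
    have "F (\<psi> p) = (if ideal U n s then (cmod (Bamp U n i0 k0 s))\<^sup>2 * (\<Prod>k<n. fact (s k - (if k = k0 then 1 else 0))) else 0)"
      unfolding F_def pat hp rp ..
    then show "F (\<psi> p) = (case p of (s, k0) \<Rightarrow>
        if ideal U n s then (cmod (Bamp U n i0 k0 s))\<^sup>2 * (\<Prod>k<n. fact (s k - (if k = k0 then 1 else 0))) else 0)"
      using ps by simp
  qed
  finally show ?thesis unfolding E_def C_def .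
qed

lemma prod_fact_remove:
  fixes n k0 :: nat and s :: "nat \<Rightarrow> nat"
  assumes "k0 < n" "1 \<le> s k0"
  shows "real (s k0) * (\<Prod>k<n. (fact (s k - (if k = k0 then 1 else 0)) :: real)) = (\<Prod>k<n. fact (s k))"
proof -
  have k0: "k0 \<in> {..<n}" using assms by simp
  have a: "(\<Prod>k<n. (fact (s k - (if k = k0 then 1 else 0)) :: real)) = fact (s k0 - 1) * (\<Prod>k\<in>{..<n} - {k0}. fact (s k))"
    by (subst prod.remove[of "{..<n}" k0]) (use k0 in auto)
  have b: "(\<Prod>k<n. (fact (s k)::real)) = fact (s k0) * (\<Prod>k\<in>{..<n} - {k0}. fact (s k))"
    by (subst prod.remove[of "{..<n}" k0]) (use k0 in auto)
  have c: "(fact (s k0) :: real) = real (s k0) * fact (s k0 - 1)"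
    using assms(2) fact_reduce[of "s k0"] by simp
  show ?thesis unfolding a b c by simp
qed

lemma herald_one_eq:
  assumes sym: "\<And>i0 i1. i0 < n \<Longrightarrow> i1 < n \<Longrightarrow> \<exists>\<pi> \<psi>. bij_betw \<pi> {..<n} {..<n} \<and> \<pi> i0 = i1 \<and>
       (\<forall>k i. i < n \<longrightarrow> U k (\<pi> i) = U k i * \<psi> k)"
    and n: "n \<ge> 2" and i0: "i0 < n" and c: "c \<noteq> 0"
  shows "herald_rate U n (\<lambda>k. if k = i0 then c else 0) = (\<Sum>s\<in>counts n ` out_maps n.
     if ideal U n s then (cmod (Aamp U n s))\<^sup>2 * (\<Prod>k<n. fact (s k)) else 0) / real n"
proof -
  define C where "C = counts n ` out_maps n"
  define K where "K s = {k0. k0 < n \<and> 1 \<le> s k0}" for s :: "nat \<Rightarrow> nat"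
  define G where "G s k0 = (if ideal U n s then (cmod (Bamp U n i0 k0 s))\<^sup>2 * (\<Prod>k<n. (fact (s k - (if k = k0 then 1 else 0)) :: real)) else 0)" for s k0
  define X where "X s = (cmod (Aamp U n s))\<^sup>2 * (\<Prod>k<n. (fact (s k) :: real))" for s
  have finC: "finite C" unfolding C_def using finite_out_maps by simp
  have "herald_rate U n (\<lambda>k. if k = i0 then c else 0) = (\<Sum>(s, k0)\<in>Sigma C K. G s k0)"
    unfolding C_def K_def G_def by (rule herald_rate_one[OF n i0 c refl])
  also have "\<dots> = (\<Sum>s\<in>C. \<Sum>k0\<in>K s. G s k0)"
    by (rule sum.Sigma[symmetric]) (auto simp: finC K_def)
  also have "\<dots> = (\<Sum>s\<in>C. if ideal U n s then X s / real n else 0)"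
  proof (rule sum.cong[OF refl])
    fix s assume sC: "s \<in> C"
    show "(\<Sum>k0\<in>K s. G s k0) = (if ideal U n s then X s / real n else 0)"
    proof (cases "ideal U n s")
      case False
      then show ?thesis unfolding G_def by simp
    next
      case True
      then have A: "Aamp U n s \<noteq> 0" unfolding ideal_def fock_amp_def Aamp_def Tm_def by auto
      have n0: "real n > 0" using n by simp
      have Gk: "G s k0 = real (s k0) * X s / (real n)\<^sup>2" if k0: "k0 \<in> K s" for k0
      proof -
        have "of_nat n * Bamp U n i0 k0 s = of_nat (s k0) * Aamp U n s"
          by (rule Bamp_formula[OF sym A i0])
        then have "real n * cmod (Bamp U n i0 k0 s) = real (s k0) * cmod (Aamp U n s)"
          by (metis norm_mult norm_of_nat)
        then have B: "cmod (Bamp U n i0 k0 s) = real (s k0) * cmod (Aamp U n s) / real n"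
          using n0 by (simp add: field_simps)
        have P: "real (s k0) * (\<Prod>k<n. (fact (s k - (if k = k0 then 1 else 0)) :: real)) = (\<Prod>k<n. fact (s k))"
          using k0 unfolding K_def by (intro prod_fact_remove) auto
        show ?thesis unfolding G_def X_def using True B P[symmetric]
          by (simp add: power2_eq_square field_simps)
      qed
      have "(\<Sum>k0\<in>K s. G s k0) = (\<Sum>k0\<in>K s. real (s k0) * X s / (real n)\<^sup>2)"
        using Gk by simp
      also have "\<dots> = real (\<Sum>k0\<in>K s. s k0) * X s / (real n)\<^sup>2"
        by (simp add: sum_divide_distrib[symmetric] sum_distrib_right[symmetric])
      also have "(\<Sum>k0\<in>K s. s k0) = (\<Sum>k0<n. s k0)"
        by (rule sum.mono_neutral_left) (auto simp: K_def)
      also have "(\<Sum>k0<n. s k0) = n" using sC counts_sum unfolding C_def by auto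
      finally show ?thesis using True n0 by (simp add: power2_eq_square)
    qed
  qed
  also have "\<dots> = (\<Sum>s\<in>C. if ideal U n s then X s else 0) / real n"
    by (simp add: sum_divide_distrib) (rule sum.cong, simp_all)
  finally show ?thesis unfolding C_def X_def .
qed


lemma model_facts:
  assumes "\<forall>R. model = URS R \<longrightarrow> R \<ge> 1"
  shows "0 \<in> allowed_labels model i"
    and "finite (allowed_labels model i)"
    and "finite (error_labels model i)"
    and "card (error_labels model i) \<ge> 1"
    and "c \<in> error_labels model i \<Longrightarrow> label_weight model \<epsilon> c = \<epsilon> / real (card (error_labels model i))"
    and "label_weight model \<epsilon> 0 = 1 - \<epsilon>"
    and "0 \<le> \<epsilon> \<Longrightarrow> \<epsilon> \<le> 1 \<Longrightarrow> 0 \<le> label_weight model \<epsilon> c \<and> label_weight model \<epsilon> c \<le> 1"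
    and "0 \<le> \<epsilon> \<Longrightarrow> c \<noteq> 0 \<Longrightarrow> label_weight model \<epsilon> c \<le> \<epsilon>"
    and "c \<in> error_labels model i \<longleftrightarrow> c \<in> allowed_labels model i \<and> c \<noteq> 0"
proof -
  show "0 \<in> allowed_labels model i" by (cases model) auto
  show "finite (allowed_labels model i)" by (cases model) auto
  then show "finite (error_labels model i)" unfolding error_labels_def by simp
  show "c \<in> error_labels model i \<longleftrightarrow> c \<in> allowed_labels model i \<and> c \<noteq> 0"
    unfolding error_labels_def by auto
  show "label_weight model \<epsilon> 0 = 1 - \<epsilon>" by (cases model) auto
  show "card (error_labels model i) \<ge> 1"
  proof (cases model)
    case (URS R)
    then have "error_labels model i = {1..R}" unfolding error_labels_def by auto
    then show ?thesis using assms URS by simp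
  next
    case OBB
    then have "error_labels model i = {Suc i}" unfolding error_labels_def by auto
    then show ?thesis by simp
  qed
  show "label_weight model \<epsilon> c = \<epsilon> / real (card (error_labels model i))" if "c \<in> error_labels model i"
  proof (cases model)
    case (URS R)
    then have "error_labels model i = {1..R}" unfolding error_labels_def by auto
    then show ?thesis using that URS by simp
  next
    case OBB
    then have "error_labels model i = {Suc i}" unfolding error_labels_def by auto
    then show ?thesis using that OBB by simp
  qed
  show "0 \<le> label_weight model \<epsilon> c \<and> label_weight model \<epsilon> c \<le> 1" if "0 \<le> \<epsilon>" "\<epsilon> \<le> 1"
  proof (cases model)
    case (URS R)
    then have R: "real R \<ge> 1" using assms by simp
    have "\<epsilon> * 1 \<le> \<epsilon> * real R" using R that by (intro mult_left_mono) auto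
    then have "\<epsilon> / real R \<le> \<epsilon>" using R by (simp add: divide_le_eq)
    then show ?thesis using URS that R by auto
  next
    case OBB
    then show ?thesis using that by auto
  qed
  show "label_weight model \<epsilon> c \<le> \<epsilon>" if "0 \<le> \<epsilon>" "c \<noteq> 0"
  proof (cases model)
    case (URS R)
    then have R: "real R \<ge> 1" using assms by simp
    have "\<epsilon> * 1 \<le> \<epsilon> * real R" using R that by (intro mult_left_mono) auto
    then have "\<epsilon> / real R \<le> \<epsilon>" using R by (simp add: divide_le_eq)
    then show ?thesis using URS that by auto
  next
    case OBB
    then show ?thesis using that by auto
  qed
qed

lemma herald_rate_cong:
  assumes "\<forall>i<n. lab i = lab' i"
  shows "herald_rate U n lab = herald_rate U n lab'"
proof -
  have rc: "res_counts n lab = res_counts n lab'"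
    unfolding res_counts_def using assms by (intro ext) (auto intro!: arg_cong[where f = card])
  have im: "lab ` {..<n} = lab' ` {..<n}" using assms by (auto simp: image_def)
  show ?thesis unfolding herald_rate_def res_prob_def rc im ..
qed

lemma bern_bound:
  fixes \<epsilon> :: real
  assumes "0 \<le> \<epsilon>" "\<epsilon> \<le> 1"
  shows "\<bar>(1 - \<epsilon>) ^ m - 1 + real m * \<epsilon>\<bar> \<le> (real m)\<^sup>2 * \<epsilon>\<^sup>2"
proof (induction m)
  case 0
  then show ?case by simp
next
  case (Suc m)
  have e: "(1 - \<epsilon>) ^ Suc m - 1 + real (Suc m) * \<epsilon> = (1 - \<epsilon>) * ((1 - \<epsilon>) ^ m - 1 + real m * \<epsilon>) + real m * \<epsilon>\<^sup>2"
    by (simp add: algebra_simps power2_eq_square)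
  have "\<bar>(1 - \<epsilon>) * ((1 - \<epsilon>) ^ m - 1 + real m * \<epsilon>)\<bar> \<le> (real m)\<^sup>2 * \<epsilon>\<^sup>2"
  proof -
    have "\<bar>(1 - \<epsilon>) * ((1 - \<epsilon>) ^ m - 1 + real m * \<epsilon>)\<bar> = (1 - \<epsilon>) * \<bar>(1 - \<epsilon>) ^ m - 1 + real m * \<epsilon>\<bar>"
      using assms by (simp add: abs_mult)
    also have "\<dots> \<le> 1 * ((real m)\<^sup>2 * \<epsilon>\<^sup>2)"
      using Suc.IH assms by (intro mult_mono) auto
    finally show ?thesis by simp
  qed
  moreover have "0 \<le> real m * \<epsilon>\<^sup>2" by simp
  moreover have "(real m)\<^sup>2 * \<epsilon>\<^sup>2 + real m * \<epsilon>\<^sup>2 \<le> (real (Suc m))\<^sup>2 * \<epsilon>\<^sup>2"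
  proof -
    have "0 \<le> (real m + 1) * \<epsilon>\<^sup>2" by simp
    then show ?thesis by (simp add: power2_eq_square algebra_simps)
  qed
  ultimately show ?case unfolding e by linarith
qed

lemma decomposition:
  assumes model: "\<forall>R. model = URS R \<longrightarrow> R \<ge> 1"
    and n: "n \<ge> 1"
    and hz: "\<And>lab. \<forall>i<n. lab i = 0 \<Longrightarrow> herald_rate U n lab = Hz"
    and h1: "\<And>i c. i < n \<Longrightarrow> c \<noteq> 0 \<Longrightarrow> herald_rate U n (\<lambda>k. if k = i then c else 0) = Hz / real n"
    and eps: "0 \<le> \<epsilon>" "\<epsilon> \<le> 1"
  shows "\<bar>h_eps model U n \<epsilon> - (1 - \<epsilon>) ^ n * Hz - \<epsilon> * (1 - \<epsilon>) ^ (n - 1) * Hz\<bar>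
     \<le> \<epsilon>\<^sup>2 * (\<Sum>lab\<in>Pi\<^sub>E {..<n} (allowed_labels model). \<bar>herald_rate U n lab\<bar>)"
proof -
  note mf = model_facts[OF model]
  define P where "P = Pi\<^sub>E {..<n} (allowed_labels model)"
  define W where "W lab = (\<Prod>i<n. label_weight model \<epsilon> (lab i))" for lab
  define H where "H = herald_rate U n"
  define EL where "EL = error_labels model"
  define lab0 where "lab0 = restrict (\<lambda>_. 0::nat) {..<n}"
  define e where "e p = restrict (\<lambda>k. if k = fst p then snd p else (0::nat)) {..<n}" for p :: "nat \<times> nat"
  define Sg where "Sg = (SIGMA i:{..<n}. EL i)"
  define S1 where "S1 = e ` Sg"
  define S2 where "S2 = P - insert lab0 S1"
  have finP: "finite P" unfolding P_def using mf(2) by (intro finite_PiE) auto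
  have lab0P: "lab0 \<in> P" unfolding P_def lab0_def using mf(1) by auto
  have S1P: "S1 \<subseteq> P"
  proof
    fix lab assume "lab \<in> S1"
    then obtain i c where ic: "i < n" "c \<in> EL i" "lab = e (i, c)" unfolding S1_def Sg_def by auto
    have "c \<in> allowed_labels model i" using ic(2) mf(9) unfolding EL_def by auto
    then show "lab \<in> P" unfolding ic(3) e_def P_def using mf(1) by (auto simp: restrict_PiE_iff)
  qed
  have lab0S1: "lab0 \<notin> S1"
  proof
    assume "lab0 \<in> S1"
    then obtain i c where ic: "i < n" "c \<in> EL i" "lab0 = e (i, c)" unfolding S1_def Sg_def by auto
    then have "lab0 i = c" unfolding e_def by simp
    moreover have "c \<noteq> 0" using ic(2) mf(9) unfolding EL_def by auto
    ultimately show False using ic(1) unfolding lab0_def by simp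
  qed
  have inj: "inj_on e Sg"
  proof (rule inj_onI)
    fix p q assume p: "p \<in> Sg" and q: "q \<in> Sg" and pq: "e p = e q"
    have c0: "snd p \<noteq> 0" "snd q \<noteq> 0" using p q mf(9) unfolding Sg_def EL_def by auto
    have "e p (fst p) = e q (fst p)" using pq by simp
    then have "fst p = fst q" "snd p = snd q" using p c0 unfolding e_def Sg_def by (auto split: if_splits)
    then show "p = q" by (simp add: prod_eq_iff)
  qed
  have WH: "h_eps model U n \<epsilon> = (\<Sum>lab\<in>P. W lab * H lab)"
    unfolding h_eps_def P_def W_def H_def ..
  also have "\<dots> = (\<Sum>lab\<in>S2. W lab * H lab) + (\<Sum>lab\<in>insert lab0 S1. W lab * H lab)"
    unfolding S2_def by (rule sum.subset_diff) (use lab0P S1P finP in auto)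
  also have "(\<Sum>lab\<in>insert lab0 S1. W lab * H lab) = W lab0 * H lab0 + (\<Sum>lab\<in>S1. W lab * H lab)"
    by (rule sum.insert) (use lab0S1 finite_subset[OF S1P finP] in auto)
  finally have dec: "h_eps model U n \<epsilon> = (\<Sum>lab\<in>S2. W lab * H lab) + W lab0 * H lab0 + (\<Sum>lab\<in>S1. W lab * H lab)"
    by simp
  have W0: "W lab0 = (1 - \<epsilon>) ^ n" unfolding W_def lab0_def using mf(6) by simp
  have H0: "H lab0 = Hz" unfolding H_def by (rule hz) (simp add: lab0_def)
  have S1sum: "(\<Sum>lab\<in>S1. W lab * H lab) = \<epsilon> * (1 - \<epsilon>) ^ (n - 1) * Hz"
  proof -
    have "(\<Sum>lab\<in>S1. W lab * H lab) = (\<Sum>p\<in>Sg. W (e p) * H (e p))"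
      unfolding S1_def by (rule sum.reindex[OF inj, unfolded comp_def])
    also have "\<dots> = (\<Sum>i<n. \<Sum>c\<in>EL i. W (e (i, c)) * H (e (i, c)))"
      unfolding Sg_def by (subst sum.Sigma) (auto simp: EL_def mf(3) split_def)
    also have "\<dots> = (\<Sum>i<n. \<Sum>c\<in>EL i. (1 - \<epsilon>) ^ (n - 1) * (\<epsilon> / real (card (EL i))) * (Hz / real n))"
    proof (intro sum.cong refl)
      fix i c assume i: "i \<in> {..<n}" and c: "c \<in> EL i"
      have c0: "c \<noteq> 0" using c mf(9) unfolding EL_def by auto
      have "W (e (i, c)) = (\<Prod>k<n. label_weight model \<epsilon> (if k = i then c else 0))"
        unfolding W_def e_def by (intro prod.cong) auto
      also have "\<dots> = label_weight model \<epsilon> c * (\<Prod>k\<in>{..<n} - {i}. label_weight model \<epsilon> (if k = i then c else 0))"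
        by (subst prod.remove[of "{..<n}" i]) (use i in auto)
      also have "(\<Prod>k\<in>{..<n} - {i}. label_weight model \<epsilon> (if k = i then c else 0)) = (\<Prod>k\<in>{..<n} - {i}. 1 - \<epsilon>)"
        using mf(6) by (intro prod.cong) auto
      also have "\<dots> = (1 - \<epsilon>) ^ (n - 1)" using i by simp
      finally have "W (e (i, c)) = (1 - \<epsilon>) ^ (n - 1) * (\<epsilon> / real (card (EL i)))"
        using mf(5)[of c i \<epsilon>] c unfolding EL_def by simp
      moreover have "H (e (i, c)) = Hz / real n"
      proof -
        have "H (e (i, c)) = herald_rate U n (\<lambda>k. if k = i then c else 0)"
          unfolding H_def e_def by (rule herald_rate_cong) auto
        then show ?thesis using h1 i c0 by simp
      qed
      ultimately show "W (e (i, c)) * H (e (i, c)) = (1 - \<epsilon>) ^ (n - 1) * (\<epsilon> / real (card (EL i))) * (Hz / real n)"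
        by simp
    qed
    also have "\<dots> = (\<Sum>i<n. (1 - \<epsilon>) ^ (n - 1) * \<epsilon> * (Hz / real n))"
    proof (rule sum.cong[OF refl])
      fix i
      have cp: "real (card (EL i)) > 0" using mf(4)[of i] unfolding EL_def by simp
      show "(\<Sum>c\<in>EL i. (1 - \<epsilon>) ^ (n - 1) * (\<epsilon> / real (card (EL i))) * (Hz / real n)) = (1 - \<epsilon>) ^ (n - 1) * \<epsilon> * (Hz / real n)"
        using cp by simp
    qed
    also have "\<dots> = \<epsilon> * (1 - \<epsilon>) ^ (n - 1) * Hz" using n by simp
    finally show ?thesis .
  qed
  have S2bound: "\<bar>W lab * H lab\<bar> \<le> \<epsilon>\<^sup>2 * \<bar>H lab\<bar>" if lab: "lab \<in> S2" for lab
  proof -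
    have labP: "lab \<in> P" and ne0: "lab \<noteq> lab0" and nS1: "lab \<notin> S1" using lab unfolding S2_def by auto
    define N where "N = {k\<in>{..<n}. lab k \<noteq> 0}"
    have finN: "finite N" unfolding N_def by simp
    have Nne: "N \<noteq> {}"
    proof
      assume "N = {}"
      then have "\<forall>k<n. lab k = 0" unfolding N_def by auto
      moreover have "lab \<in> extensional {..<n}" using labP unfolding P_def by (simp add: PiE_iff)
      ultimately have "lab = lab0" unfolding lab0_def by (intro ext) (auto simp: extensional_def)
      then show False using ne0 by simp
    qed
    have N1: "card N \<noteq> 1"
    proof
      assume "card N = 1"
      then obtain i where Ni: "N = {i}" by (rule card_1_singletonE)
      then have i: "i < n" "lab i \<noteq> 0" unfolding N_def by auto
      have "lab i \<in> allowed_labels model i" using labP i unfolding P_def by auto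
      then have "lab i \<in> EL i" using i mf(9) unfolding EL_def by auto
      moreover have "lab = e (i, lab i)"
      proof
        fix k
        show "lab k = e (i, lab i) k"
        proof (cases "k < n")
          case True
          have "k \<in> N \<longleftrightarrow> k = i" using Ni by blast
          then have "lab k \<noteq> 0 \<longleftrightarrow> k = i" using True unfolding N_def by simp
          then show ?thesis using True unfolding e_def by (cases "k = i") auto
        next
          case False
          moreover have "lab \<in> extensional {..<n}" using labP unfolding P_def by (simp add: PiE_iff)
          ultimately show ?thesis unfolding e_def by (auto simp: extensional_def)
        qed
      qed
      ultimately have "lab \<in> S1" using i unfolding S1_def Sg_def by auto
      then show False using nS1 by simp
    qed
    have cN: "2 \<le> card N" using Nne N1 finN by (metis card_0_eq One_nat_def less_2_cases not_less)
    have Wnn: "0 \<le> W lab" unfolding W_def using mf(7) eps by (intro prod_nonneg) auto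
    have "W lab \<le> (\<Prod>k<n. if lab k = 0 then 1 else \<epsilon>)"
      unfolding W_def using mf(7,8) eps mf(6) by (intro prod_mono) auto
    also have "\<dots> = (\<Prod>k\<in>{..<n} \<inter> {k. lab k = 0}. 1) * (\<Prod>k\<in>{..<n} \<inter> - {k. lab k = 0}. \<epsilon>)"
      by (rule prod.If_cases) simp
    also have "{..<n} \<inter> - {k. lab k = 0} = N" unfolding N_def by auto
    also have "(\<Prod>k\<in>{..<n} \<inter> {k. lab k = 0}. (1::real)) * (\<Prod>k\<in>N. \<epsilon>) = \<epsilon> ^ card N" by simp
    also have "\<dots> \<le> \<epsilon> ^ 2" by (rule power_decreasing[OF cN eps])
    finally have "W lab \<le> \<epsilon>\<^sup>2" .
    then show ?thesis using Wnn by (simp add: abs_mult mult_right_mono)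
  qed
  have "\<bar>\<Sum>lab\<in>S2. W lab * H lab\<bar> \<le> (\<Sum>lab\<in>S2. \<epsilon>\<^sup>2 * \<bar>H lab\<bar>)"
    by (rule order_trans[OF sum_abs sum_mono]) (use S2bound in auto)
  also have "\<dots> = \<epsilon>\<^sup>2 * (\<Sum>lab\<in>S2. \<bar>H lab\<bar>)" by (simp add: sum_distrib_left)
  also have "\<dots> \<le> \<epsilon>\<^sup>2 * (\<Sum>lab\<in>P. \<bar>H lab\<bar>)"
    by (intro mult_left_mono sum_mono2) (auto simp: S2_def finP)
  finally show ?thesis unfolding dec W0 H0 S1sum unfolding P_def H_def by simp
qed

lemma phi1_value:
  assumes model: "\<forall>R. model = URS R \<longrightarrow> R \<ge> 1"
    and n: "n \<ge> 1"
    and h1: "\<And>i c. i < n \<Longrightarrow> c \<noteq> 0 \<Longrightarrow> herald_rate U n (\<lambda>k. if k = i then c else 0) = Hz / real n"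
  shows "h_Phi1 model U n = Hz / real n"
proof -
  note mf = model_facts[OF model]
  have "h_Phi1 model U n = (\<Sum>i<n. \<Sum>c\<in>error_labels model i. (Hz / real n) / (real n * real (card (error_labels model i))))"
    unfolding h_Phi1_def
  proof (intro sum.cong refl)
    fix i c assume "i \<in> {..<n}" "c \<in> error_labels model i"
    then show "herald_rate U n (\<lambda>k. if k = i then c else 0) / (real n * real (card (error_labels model i))) =
         Hz / real n / (real n * real (card (error_labels model i)))" using h1 mf(9) by auto
  qed
  also have "\<dots> = (\<Sum>i<n. (Hz / real n) / real n)"
  proof (rule sum.cong[OF refl])
    fix i
    have cp: "real (card (error_labels model i)) > 0" using mf(4)[of i] by simp
    show "(\<Sum>c\<in>error_labels model i. Hz / real n / (real n * real (card (error_labels model i)))) = Hz / real n / real n"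
      using cp by simp
  qed
  also have "\<dots> = Hz / real n" using n by simp
  finally show ?thesis .
qed

theorem theorem2:
  fixes ns :: "nat list" and model :: noise
  assumes "\<forall>m\<in>set ns. m \<ge> 2"
    and "prod_list ns > 2"
    and "\<forall>R. model = URS R \<longrightarrow> R \<ge> 1"
  shows "h_Phi1 model (fourier_tensor ns) (prod_list ns)
           = h_eps model (fourier_tensor ns) (prod_list ns) 0 / real (prod_list ns)
       \<and> (\<lambda>\<epsilon>. h_eps model (fourier_tensor ns) (prod_list ns) \<epsilon>
              - (h_eps model (fourier_tensor ns) (prod_list ns) 0
                 - (real (prod_list ns) - 1) * h_eps model (fourier_tensor ns) (prod_list ns) 0 * \<epsilon>))
         \<in> O[at_right 0](\<lambda>\<epsilon>. \<epsilon>\<^sup>2)"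
proof -
  define n where "n = prod_list ns"
  define U where "U = fourier_tensor ns"
  define Hz where "Hz = (\<Sum>s\<in>counts n ` out_maps n.
     if ideal U n s then (cmod (Aamp U n s))\<^sup>2 * (\<Prod>k<n. fact (s k)) else 0)"
  define K where "K = (\<Sum>lab\<in>Pi\<^sub>E {..<n} (allowed_labels model). \<bar>herald_rate U n lab\<bar>)"
  have n2: "n \<ge> 2" and n1: "n \<ge> 1" using assms(2) unfolding n_def by auto
  have pos: "\<forall>m\<in>set ns. m > 0" using assms(1) by auto
  have sym: "\<exists>\<pi> \<psi>. bij_betw \<pi> {..<n} {..<n} \<and> \<pi> i0 = i1 \<and> (\<forall>k i. i < n \<longrightarrow> U k (\<pi> i) = U k i * \<psi> k)"
    if "i0 < n" "i1 < n" for i0 i1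
    using sym_exists[OF pos, of i0 i1] that unfolding n_def U_def by blast
  have hz: "herald_rate U n lab = Hz" if "\<forall>i<n. lab i = 0" for lab
    unfolding Hz_def by (rule herald_rate_zero[OF n1 that])
  have h1: "herald_rate U n (\<lambda>k. if k = i then c else 0) = Hz / real n" if "i < n" "c \<noteq> 0" for i c
    unfolding Hz_def by (rule herald_one_eq[OF sym n2 that])
  note dec = decomposition[OF assms(3) n1 hz h1, folded K_def]
  have h0: "h_eps model U n 0 = Hz" using dec[of 0] by simp
  have part1: "h_Phi1 model U n = h_eps model U n 0 / real n"
    unfolding h0 by (rule phi1_value[OF assms(3) n1 h1])
  have part2: "(\<lambda>\<epsilon>. h_eps model U n \<epsilon> - (h_eps model U n 0 - (real n - 1) * h_eps model U n 0 * \<epsilon>))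
      \<in> O[at_right 0](\<lambda>\<epsilon>. \<epsilon>\<^sup>2)"
  proof (rule bigoI)
    show "\<forall>\<^sub>F \<epsilon> in at_right 0. norm (h_eps model U n \<epsilon> - (h_eps model U n 0 - (real n - 1) * h_eps model U n 0 * \<epsilon>))
        \<le> (K + \<bar>Hz\<bar> * (real (n - 1))\<^sup>2) * norm (\<epsilon>\<^sup>2)"
      unfolding eventually_at_right_field
    proof (intro exI[of _ 1] conjI allI impI)
      fix \<epsilon> :: real assume e0: "0 < \<epsilon>" and e1: "\<epsilon> < 1"
      define g where "g = (1 - \<epsilon>) ^ (n - 1) - 1 + real (n - 1) * \<epsilon>"
      have gb: "\<bar>g\<bar> \<le> (real (n - 1))\<^sup>2 * \<epsilon>\<^sup>2" unfolding g_def using e0 e1 by (intro bern_bound) auto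
      have pw: "(1 - \<epsilon>) ^ n = (1 - \<epsilon>) * (1 - \<epsilon>) ^ (n - 1)" using n1 by (metis Suc_diff_1 less_le_trans zero_less_one power_Suc)
      have rn: "real (n - 1) = real n - 1" using n1 by simp
      have eq: "h_eps model U n \<epsilon> - (h_eps model U n 0 - (real n - 1) * h_eps model U n 0 * \<epsilon>)
          = (h_eps model U n \<epsilon> - (1 - \<epsilon>) ^ n * Hz - \<epsilon> * (1 - \<epsilon>) ^ (n - 1) * Hz) + Hz * g"
        unfolding h0 g_def pw rn by (simp add: algebra_simps)
      have d: "\<bar>h_eps model U n \<epsilon> - (1 - \<epsilon>) ^ n * Hz - \<epsilon> * (1 - \<epsilon>) ^ (n - 1) * Hz\<bar> \<le> \<epsilon>\<^sup>2 * K"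
        using dec[of \<epsilon>] e0 e1 by simp
      have "\<bar>Hz * g\<bar> \<le> \<bar>Hz\<bar> * ((real (n - 1))\<^sup>2 * \<epsilon>\<^sup>2)" unfolding abs_mult
        by (rule mult_left_mono[OF gb]) simp
      then show "norm (h_eps model U n \<epsilon> - (h_eps model U n 0 - (real n - 1) * h_eps model U n 0 * \<epsilon>))
        \<le> (K + \<bar>Hz\<bar> * (real (n - 1))\<^sup>2) * norm (\<epsilon>\<^sup>2)"
        unfolding eq real_norm_def using d by (simp add: algebra_simps)
    qed simp
  qed
  show ?thesis using part1 part2 unfolding n_def U_def by simp
qed


end
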